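(* Let $G$ and $H$ be finite simple graphs, each with at least two vertices. Then the modular product $G\diamond H$ has no two distinct vertices $x,y$ with $N_{G\diamond H}(x)=N_{G\diamond H}(y)$.
   Context: The modular product $G\diamond H$ has vertex set $V(G)\times V(H)$; distinct vertices $(g,h)$ and $(g',h')$ are adjacent iff ($g=g'$ and $hh'\in E(H)$), or ($gg'\in E(G)$ and $h=h'$), or ($gg'\in E(G)$ and $hh'\in E(H)$), or ($g\neq g'$, $h\neq h'$, $gg'\notin E(G)$ and $hh'\notin E(H)$). $N_X(v)$ denotes the open neighborhood of $v$ in a graph $X$. *)

theory Defs
  imports Main
begin

definition simple_graph :: "'a set \<Rightarrow> ('a \<Rightarrow> 'a \<Rightarrow> bool) \<Rightarrow> bool" where
  "simple_graph V E \<longleftrightarrow> finite V \<and> (\<forall>x y. E x y \<longrightarrow> x \<in> V \<and> y \<in> V)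
     \<and> (\<forall>x y. E x y \<longrightarrow> E y x) \<and> (\<forall>x. \<not> E x x)"

definition modprod_edge ::
  "('a \<Rightarrow> 'a \<Rightarrow> bool) \<Rightarrow> ('b \<Rightarrow> 'b \<Rightarrow> bool) \<Rightarrow> 'a \<times> 'b \<Rightarrow> 'a \<times> 'b \<Rightarrow> bool" where
  "modprod_edge EG EH x y \<longleftrightarrow> x \<noteq> y \<and>
     (let g = fst x; h = snd x; g' = fst y; h' = snd y in
       (g = g' \<and> EH h h') \<or> (EG g g' \<and> h = h') \<or> (EG g g' \<and> EH h h') \<or>
       (g \<noteq> g' \<and> h \<noteq> h' \<and> \<not> EG g g' \<and> \<not> EH h h'))"

definition nbhd :: "'a set \<Rightarrow> ('a \<Rightarrow> 'a \<Rightarrow> bool) \<Rightarrow> 'a \<Rightarrow> 'a set" where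
  "nbhd V E v = {u \<in> V. E v u}"

end

theory Submission
  imports Defs
begin

lemma other_elem: "card V \<ge> 2 \<Longrightarrow> v \<in> V \<Longrightarrow> \<exists>w\<in>V. w \<noteq> v"
proof (rule ccontr)
  assume "card V \<ge> 2" "v \<in> V" "\<not> (\<exists>w\<in>V. w \<noteq> v)"
  hence "V = {v}" by blast
  thus False using \<open>card V \<ge> 2\<close> by simp
qed

theorem mainTheorem1:
  fixes VG :: "'a set" and EG :: "'a \<Rightarrow> 'a \<Rightarrow> bool"
    and VH :: "'b set" and EH :: "'b \<Rightarrow> 'b \<Rightarrow> bool"
  assumes "simple_graph VG EG" and "simple_graph VH EH"
    and "card VG \<ge> 2" and "card VH \<ge> 2"
    and "x \<in> VG \<times> VH" and "y \<in> VG \<times> VH" and "x \<noteq> y"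
  shows "nbhd (VG \<times> VH) (modprod_edge EG EH) x \<noteq> nbhd (VG \<times> VH) (modprod_edge EG EH) y"
proof
  assume eq: "nbhd (VG \<times> VH) (modprod_edge EG EH) x = nbhd (VG \<times> VH) (modprod_edge EG EH) y"
  have key: "\<And>z. z \<in> VG \<times> VH \<Longrightarrow> modprod_edge EG EH x z = modprod_edge EG EH y z"
    using eq unfolding nbhd_def by blast
  obtain g h g' h' where x: "x = (g,h)" and y: "y = (g',h')" by (cases x, cases y) auto
  have gV: "g \<in> VG" "g' \<in> VG" "h \<in> VH" "h' \<in> VH" using assms(5,6) x y by auto
  have sG: "\<And>a b. EG a b \<Longrightarrow> EG b a" "\<And>a. \<not> EG a a"
    using assms(1) unfolding simple_graph_def by blast+
  have sH: "\<And>a b. EH a b \<Longrightarrow> EH b a" "\<And>a. \<not> EH a a"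
    using assms(2) unfolding simple_graph_def by blast+
  have nxy: "\<not> modprod_edge EG EH y x"
    using key[of x] assms(5) by (simp add: modprod_edge_def)
  show False
  proof (cases "g = g'")
    case True
    then have hh: "h \<noteq> h'" using assms(7) x y by simp
    obtain g2 where g2: "g2 \<in> VG" "g2 \<noteq> g" using other_elem[OF assms(3) gV(1)] by blast
    have "\<not> EH h h'" using nxy True hh sH x y by (auto simp: modprod_edge_def Let_def)
    moreover have "modprod_edge EG EH x (g2,h) = modprod_edge EG EH y (g2,h)"
      using key[of "(g2,h)"] g2 gV by auto
    ultimately show False using True hh g2 x y sH by (auto simp: modprod_edge_def Let_def)
  next
    case False
    show False
    proof (cases "h = h'")
      case True
      obtain h2 where h2: "h2 \<in> VH" "h2 \<noteq> h" using other_elem[OF assms(4) gV(3)] by blast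
      have "\<not> EG g g'" using nxy True False sG x y by (auto simp: modprod_edge_def Let_def)
      moreover have "modprod_edge EG EH x (g,h2) = modprod_edge EG EH y (g,h2)"
        using key[of "(g,h2)"] h2 gV by auto
      ultimately show False using True False h2 x y sG by (auto simp: modprod_edge_def Let_def)
    next
      case hne: False
      have "modprod_edge EG EH x (g,h') = modprod_edge EG EH y (g,h')"
        using key[of "(g,h')"] gV by auto
      then show False using nxy hne False x y sG sH by (auto simp: modprod_edge_def Let_def)
    qed
  qed
qed

end
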